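(* For each $n\in\mathbb{N}$ let $Y_n\colon\mathbb{I}\to\mathbb{Z}$ be a function such that for every $x\in\mathbb{I}$: (i) $Y_n(x)$ is odd; (ii) if $n=1$, $Y_1(x)\le d_1(x)<Y_1(x)+2$; (iii) if $n\ge2$ and $\epsilon_n(x)=\epsilon_{n-1}(x)$, then $Y_n(x)\le\frac{d_n(x)}{d_{n-1}(x)-1}<Y_n(x)+2$; (iv) if $n\ge2$ and $\epsilon_n(x)=-\epsilon_{n-1}(x)$, then $Y_n(x)\le\frac{d_n(x)}{d_{n-1}(x)+1}<Y_n(x)+2$. Then: (1) $\mathcal{L}(Y_n\ge 2k-1)=\frac{1}{2k-1}$ for all $n,k\in\mathbb{N}$; (2) $\frac{1}{t+2}<\mathcal{L}(Y_n\ge t)\le\frac1t$ for all $n\in\mathbb{N}$ and $t>0$; (3) $\{Y_n\}_{n\ge1}$ is a sequence of independent, identically distributed random variables (with respect to $\mathcal{L}$).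
   Context: $\mathcal{L}$ is Lebesgue measure, $\mathbb{I}=(0,1)\setminus\mathbb{Q}$. Define $T\colon[0,1)\to[0,1)$ by: for $k\in\mathbb{N}$, $Tx=\lceil 1/x\rceil x-1$ if $x\in(\frac{1}{2k},\frac{1}{2k-1})$; $Tx=1-\lfloor 1/x\rfloor x$ if $x\in(\frac{1}{2k+1},\frac{1}{2k})$; $Tx=0$ if $x\in\{0\}\cup\{1/n\colon n\ge 2\}$. For $x\in(0,1)$ define $d_1(x)=\lceil 1/x\rceil$, $s_1(x)=1$ if $x\in[\frac{1}{2k},\frac{1}{2k-1})$ for some $k$, and $d_1(x)=\lfloor 1/x\rfloor$, $s_1(x)=-1$ if $x\in[\frac{1}{2k+1},\frac{1}{2k})$ for some $k$; $d_{n+1}(x)=d_1(T^nx)$, $s_{n+1}(x)=s_1(T^nx)$, $\epsilon_1(x)=1$, $\epsilon_{n+1}(x)=\prod_{k=1}^ns_k(x)$. *)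

theory Defs
  imports "HOL-Probability.Probability"
begin

definition Irr :: "real set" where
  "Irr = {0<..<1} - \<rat>"

definition Tmap :: "real \<Rightarrow> real" where
  "Tmap x =
    (if x = 0 \<or> (\<exists>n::nat. n \<ge> 2 \<and> x = 1 / real n) then 0
     else if (\<exists>k::nat. k \<ge> 1 \<and> 1 / real (2*k) < x \<and> x < 1 / real (2*k - 1))
       then real_of_int \<lceil>1 / x\<rceil> * x - 1
     else if (\<exists>k::nat. k \<ge> 1 \<and> 1 / real (2*k+1) < x \<and> x < 1 / real (2*k))
       then 1 - real_of_int \<lfloor>1 / x\<rfloor> * x
     else 0)"

definition d1 :: "real \<Rightarrow> int" where
  "d1 x =
    (if (\<exists>k::nat. k \<ge> 1 \<and> 1 / real (2*k) \<le> x \<and> x < 1 / real (2*k - 1)) then \<lceil>1 / x\<rceil>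
     else if (\<exists>k::nat. k \<ge> 1 \<and> 1 / real (2*k+1) \<le> x \<and> x < 1 / real (2*k)) then \<lfloor>1 / x\<rfloor>
     else 0)"

definition s1 :: "real \<Rightarrow> int" where
  "s1 x =
    (if (\<exists>k::nat. k \<ge> 1 \<and> 1 / real (2*k) \<le> x \<and> x < 1 / real (2*k - 1)) then 1
     else if (\<exists>k::nat. k \<ge> 1 \<and> 1 / real (2*k+1) \<le> x \<and> x < 1 / real (2*k)) then -1
     else 0)"

definition dig :: "nat \<Rightarrow> real \<Rightarrow> int" where
  "dig n x = d1 ((Tmap ^^ (n - 1)) x)"

definition sgn_s :: "nat \<Rightarrow> real \<Rightarrow> int" where
  "sgn_s n x = s1 ((Tmap ^^ (n - 1)) x)"

definition eps :: "nat \<Rightarrow> real \<Rightarrow> int" where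
  "eps n x = (\<Prod>k\<in>{1..<n}. sgn_s k x)"

end

theory Submission
  imports Defs
begin


lemma Irr_pos: "z \<in> Irr \<Longrightarrow> 0 < z \<and> z < 1 \<and> z \<notin> \<rat>"
  by (auto simp: Irr_def)

lemma inv_not_int: assumes "z \<in> Irr" shows "1 / z \<noteq> real_of_int j"
proof
  assume "1 / z = real_of_int j"
  then have "z = 1 / real_of_int j" by (metis divide_divide_eq_right div_by_1 mult_1)
  then have "z \<in> \<rat>" by simp
  thus False using assms by (auto simp: Irr_def)
qed

lemma digit_facts:
  assumes z: "z \<in> Irr"
  defines "k \<equiv> \<lfloor>(1 / z + 1) / 2\<rfloor>"
  shows "k \<ge> 1" "2 * real_of_int k - 1 < 1 / z" "1 / z < 2 * real_of_int k + 1"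
    "d1 z = 2 * k" "s1 z = (if 1 / z < 2 * real_of_int k then 1 else -1)"
    "Tmap z = \<bar>2 * real_of_int k * z - 1\<bar>"
proof -
  have z0: "0 < z" "z < 1" using z by (auto simp: Irr_def)
  define t where "t = 1 / z"
  have t1: "t > 1" using z0 by (simp add: field_simps t_def)
  have kl0: "k \<le> (t+1)/2" "(t+1)/2 < real_of_int k + 1" unfolding k_def t_def by linarith+
  have kl: "2 * real_of_int k \<le> t + 1" "t + 1 < 2 * real_of_int k + 2" using kl0 by (simp_all add: field_simps)
  have "real_of_int k > 0" using kl t1 by linarith
  then show k1: "k \<ge> 1" by simp
  have ne: "t \<noteq> 2 * real_of_int k - 1" "t \<noteq> 2 * real_of_int k" using inv_not_int[OF z, of "2*k-1"] inv_not_int[OF z, of "2*k"] by (auto simp: t_def)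
  have "2 * real_of_int k - 1 \<le> t" using kl by linarith
  then have lo': "2 * real_of_int k - 1 < t" using ne by (simp add: less_le)
  then show lo: "2 * real_of_int k - 1 < 1 / z" by (simp add: t_def)
  have hi': "t < 2 * real_of_int k + 1" using kl by linarith
  then show hi: "1 / z < 2 * real_of_int k + 1" by (simp add: t_def)
  define K where "K = nat k"
  have kK: "k = int K" "K \<ge> 1" using k1 by (auto simp: K_def)
  have rK: "real (2*K) = 2 * real_of_int k" "real (2*K - 1) = 2 * real_of_int k - 1" "real (2*K+1) = 2 * real_of_int k + 1"
    using kK by auto
  have eqv: "\<And>a. a > 0 \<Longrightarrow> (1 / a \<le> z \<longleftrightarrow> 1 / z \<le> a)" "\<And>a. a > 0 \<Longrightarrow> (z < 1 / a \<longleftrightarrow> a < 1 / z)"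
    "\<And>a. a > 0 \<Longrightarrow> (1 / a < z \<longleftrightarrow> 1 / z < a)"
    using z0 by (auto simp: field_simps)
  have notspecial: "\<not> (z = 0 \<or> (\<exists>n::nat. n \<ge> 2 \<and> z = 1 / real n))"
  proof
    assume "z = 0 \<or> (\<exists>n::nat. n \<ge> 2 \<and> z = 1 / real n)"
    then obtain n :: nat where "z = 1 / real n" using z0 by auto
    then have "z \<in> \<rat>" by simp
    thus False using z by (auto simp: Irr_def)
  qed
  have "d1 z = 2 * k \<and> s1 z = (if 1 / z < 2 * real_of_int k then 1 else -1) \<and> Tmap z = \<bar>2 * real_of_int k * z - 1\<bar>"
  proof (cases "1 / z < 2 * real_of_int k")
    case True
    have p1: "real (2*K) > 0" "real (2*K-1) > 0" using kK by auto
    have a1: "1 / real (2*K) < z" using eqv(3)[OF p1(1)] rK True by simp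
    have a2: "z < 1 / real (2*K-1)" using eqv(2)[OF p1(2)] rK lo by simp
    have ex1: "\<exists>k::nat. k \<ge> 1 \<and> 1 / real (2*k) \<le> z \<and> z < 1 / real (2*k - 1)"
      apply (rule exI[of _ K]) using kK a1 a2 by auto
    have ex2: "\<exists>k::nat. k \<ge> 1 \<and> 1 / real (2*k) < z \<and> z < 1 / real (2*k - 1)"
      apply (rule exI[of _ K]) using kK a1 a2 by auto
    have c: "\<lceil>1 / z\<rceil> = 2 * k" using True lo by (intro ceiling_unique) auto
    have "2 * k * z - 1 > 0" using True lo z0 by (auto simp: field_simps)
    then show ?thesis using ex1 ex2 c True notspecial
      unfolding d1_def s1_def Tmap_def by auto
  next
    case False
    then have "2 * real_of_int k \<le> 1 / z" by simp
    then have F: "2 * real_of_int k < 1 / z" using ne(2) by (auto simp: t_def less_le)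
    have nex1: "\<not> (\<exists>k::nat. k \<ge> 1 \<and> 1 / real (2*k) \<le> z \<and> z < 1 / real (2*k - 1))"
    proof
      assume "\<exists>k::nat. k \<ge> 1 \<and> 1 / real (2*k) \<le> z \<and> z < 1 / real (2*k - 1)"
      then obtain j :: nat where j: "j \<ge> 1" "1 / real (2*j) \<le> z" "z < 1 / real (2*j - 1)" by auto
      have "real (2*j - 1) = 2 * real j - 1" using j by auto
      then have "1 / z \<le> 2 * real j" "2 * real j - 1 < 1 / z" using j eqv[of "real (2*j)"] eqv[of "real (2*j-1)"] by auto
      then have "2 * real j - 1 < 2 * k + 1" "2 * k < 2 * real j" using F hi by linarith+
      then have "int j < k + 1" "k < int j" by linarith+
      thus False by linarith
    qed
    have p1: "real (2*K) > 0" "real (2*K+1) > 0" using kK by auto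
    have a1: "1 / real (2*K+1) < z" using eqv(3)[OF p1(2)] rK hi by simp
    have a2: "z < 1 / real (2*K)" using eqv(2)[OF p1(1)] rK F by simp
    have ex2: "\<exists>k::nat. k \<ge> 1 \<and> 1 / real (2*k+1) \<le> z \<and> z < 1 / real (2*k)"
      apply (rule exI[of _ K]) using kK a1 a2 by auto
    have nex3: "\<not> (\<exists>k::nat. k \<ge> 1 \<and> 1 / real (2*k) < z \<and> z < 1 / real (2*k - 1))"
      using nex1 by auto
    have ex4: "\<exists>k::nat. k \<ge> 1 \<and> 1 / real (2*k+1) < z \<and> z < 1 / real (2*k)"
      apply (rule exI[of _ K]) using kK a1 a2 by auto
    have c: "\<lfloor>1 / z\<rfloor> = 2 * k" using F hi by (intro floor_unique) auto
    have "2 * k * z - 1 < 0" using F z0 by (auto simp: field_simps)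
    then show ?thesis using nex1 ex2 nex3 ex4 c False notspecial
      unfolding d1_def s1_def Tmap_def by auto
  qed
  then show "d1 z = 2 * k" "s1 z = (if 1 / z < 2 * real_of_int k then 1 else -1)" "Tmap z = \<bar>2 * real_of_int k * z - 1\<bar>" by auto
qed


definition kk :: "real \<Rightarrow> int" where "kk z = \<lfloor>(1 / z + 1) / 2\<rfloor>"

lemma T_step:
  fixes z :: real
  assumes z: "z \<in> Irr"
  shows "kk z \<ge> 1" "d1 z = 2 * kk z" "Tmap z \<in> Irr"
    "(s1 z = 1 \<and> Tmap z = 2 * real_of_int (kk z) * z - 1 \<and> 2 * real_of_int (kk z) - 1 < 1 / z \<and> 1 / z < 2 * real_of_int (kk z)) \<or>
     (s1 z = -1 \<and> Tmap z = 1 - 2 * real_of_int (kk z) * z \<and> 2 * real_of_int (kk z) < 1 / z \<and> 1 / z < 2 * real_of_int (kk z) + 1)"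
proof -
  note F = digit_facts[OF z, folded kk_def]
  show "kk z \<ge> 1" "d1 z = 2 * kk z" using F by auto
  have z0: "0 < z" "z < 1" using z by (auto simp: Irr_def)
  have ne: "1 / z \<noteq> 2 * real_of_int (kk z)" using inv_not_int[OF z, of "2 * kk z"] by simp
  show D: "(s1 z = 1 \<and> Tmap z = 2 * real_of_int (kk z) * z - 1 \<and> 2 * real_of_int (kk z) - 1 < 1 / z \<and> 1 / z < 2 * real_of_int (kk z)) \<or>
     (s1 z = -1 \<and> Tmap z = 1 - 2 * real_of_int (kk z) * z \<and> 2 * real_of_int (kk z) < 1 / z \<and> 1 / z < 2 * real_of_int (kk z) + 1)"
  proof (cases "1 / z < 2 * real_of_int (kk z)")
    case True
    then have "1 < 2 * real_of_int (kk z) * z" using z0 by (simp add: field_simps)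
    then show ?thesis using True F by auto
  next
    case False
    then have G: "2 * real_of_int (kk z) < 1 / z" using ne by (simp add: less_le)
    then have "2 * real_of_int (kk z) * z < 1" using z0 by (simp add: field_simps)
    then show ?thesis using G False F by auto
  qed
  show "Tmap z \<in> Irr"
  proof -
    have k1: "real_of_int (kk z) \<ge> 1" using F by simp
    have nq: "Tmap z \<notin> \<rat>"
    proof
      assume q: "Tmap z \<in> \<rat>"
      have "Tmap z = 2 * real_of_int (kk z) * z - 1 \<or> Tmap z = 1 - 2 * real_of_int (kk z) * z" using D by auto
      then have "z = (Tmap z + 1) / (2 * real_of_int (kk z)) \<or> z = (1 - Tmap z) / (2 * real_of_int (kk z))" using k1 by (auto simp: field_simps)
      moreover have "(Tmap z + 1) / (2 * real_of_int (kk z)) \<in> \<rat>" "(1 - Tmap z) / (2 * real_of_int (kk z)) \<in> \<rat>" using q by auto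
      ultimately have "z \<in> \<rat>" by auto
      thus False using z by (auto simp: Irr_def)
    qed
    have "0 < Tmap z \<and> Tmap z < 1"
    proof (cases "s1 z = 1")
      case True
      then have a: "Tmap z = 2 * real_of_int (kk z) * z - 1" "2 * real_of_int (kk z) - 1 < 1 / z" "1 / z < 2 * real_of_int (kk z)" using D by auto
      have "2 * real_of_int (kk z) * z > 1" using a(3) z0 by (simp add: field_simps)
      moreover have "(2 * real_of_int (kk z) - 1) * z < 1" using a(2) z0 k1 by (simp add: field_simps)
      ultimately show ?thesis using a(1) z0 by (simp add: algebra_simps)
    next
      case False
      then have a: "Tmap z = 1 - 2 * real_of_int (kk z) * z" "2 * real_of_int (kk z) < 1 / z" using D by auto
      have "2 * real_of_int (kk z) * z < 1" using a(2) z0 by (simp add: field_simps)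
      moreover have "2 * real_of_int (kk z) * z > 0" using z0 k1 by simp
      ultimately show ?thesis using a(1) by simp
    qed
    then show ?thesis using nq by (simp add: Irr_def)
  qed
qed

definition zz :: "nat \<Rightarrow> real \<Rightarrow> real" where "zz n x = (Tmap ^^ n) x"

fun mm :: "nat \<Rightarrow> real \<Rightarrow> int" where
  "mm 0 x = 1"
| "mm (Suc n) x = d1 (zz n x) - s1 (zz n x)"

lemma zz_Suc: "zz (Suc n) x = Tmap (zz n x)" by (simp add: zz_def)
lemma zz_0: "zz 0 x = x" by (simp add: zz_def)

lemma inv:
  assumes x: "x \<in> Irr"
  shows "zz n x \<in> Irr \<and> mm n x \<ge> 1 \<and> odd (mm n x) \<and> real_of_int (mm n x) * zz n x < 1"
proof (induction n)
  case 0 then show ?case using x by (simp add: zz_0 Irr_def)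
next
  case (Suc n)
  define z where "z = zz n x"
  have z: "z \<in> Irr" using Suc z_def by auto
  have z0: "0 < z" "z < 1" using z by (auto simp: Irr_def)
  note S = T_step[OF z]
  define k where "k = real_of_int (kk z)"
  have k1: "k \<ge> 1" using S by (simp add: k_def)
  have A: "zz (Suc n) x = Tmap z" "Tmap z \<in> Irr" using S by (simp_all add: zz_Suc z_def)
  have M: "mm (Suc n) x = d1 z - s1 z" by (simp add: z_def)
  show ?case
  proof (cases "s1 z = 1")
    case True
    then have a: "Tmap z = 2 * k * z - 1" "2 * k - 1 < 1 / z" using S by (auto simp: k_def)
    have m: "mm (Suc n) x = 2 * kk z - 1" using True S M by simp
    have b: "(2 * k - 1) * z < 1" using a(2) z0 k1 by (simp add: field_simps)
    have "(2 * k - 1) * (2 * k * z - 1) = 2 * k * ((2 * k - 1) * z) - (2 * k - 1)" by (simp add: algebra_simps)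
    also have "... < 2 * k * 1 - (2 * k - 1)" using b k1 by (intro diff_strict_right_mono mult_strict_left_mono) auto
    finally have c: "(2 * k - 1) * (2 * k * z - 1) < 1" by simp
    have "odd (2 * kk z - 1)" by simp
    moreover have "2 * kk z - 1 \<ge> 1" using S by simp
    ultimately show ?thesis using A m a c by (simp add: k_def)
  next
    case False
    then have a: "Tmap z = 1 - 2 * k * z" "1 / z < 2 * k + 1" "s1 z = -1" using S by (auto simp: k_def)
    have m: "mm (Suc n) x = 2 * kk z + 1" using a S M by simp
    have b: "1 < (2 * k + 1) * z" using a(2) z0 k1 by (simp add: field_simps)
    have "(2 * k + 1) * (1 - 2 * k * z) = (2 * k + 1) - 2 * k * ((2 * k + 1) * z)" by (simp add: algebra_simps)
    also have "... < (2 * k + 1) - 2 * k * 1" using b k1 by (intro diff_strict_left_mono mult_strict_left_mono) auto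
    finally have c: "(2 * k + 1) * (1 - 2 * k * z) < 1" by simp
    have "odd (2 * kk z + 1)" by simp
    moreover have "2 * kk z + 1 \<ge> 1" using S by simp
    ultimately show ?thesis using A m a c by (simp add: k_def)
  qed
qed


definition gg :: "real \<Rightarrow> int" where "gg u = 2 * \<lfloor>(1 / u + 1) / 2\<rfloor> - 1"

lemma gg_char:
  assumes "odd a" "real_of_int a < t" "t < real_of_int a + 2" "t = 1 / u"
  shows "gg u = a"
proof -
  obtain b where b: "a = 2 * b + 1" using assms(1) by (metis oddE)
  have "\<lfloor>(1 / u + 1) / 2\<rfloor> = b + 1"
    using assms(2,3) unfolding assms(4)[symmetric] b by (intro floor_unique) (auto simp: field_simps)
  then show ?thesis unfolding gg_def b by simp
qed

lemma dig_Suc: "dig (Suc n) x = d1 (zz n x)" by (simp add: dig_def zz_def)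
lemma sgn_s_Suc: "sgn_s (Suc n) x = s1 (zz n x)" by (simp add: sgn_s_def zz_def)

lemma s1_pm: "z \<in> Irr \<Longrightarrow> s1 z = 1 \<or> s1 z = -1"
  using T_step(4) by blast

lemma eps_Suc: "n \<ge> 1 \<Longrightarrow> eps (Suc n) x = eps n x * sgn_s n x"
  unfolding eps_def by (simp add: prod.atLeastLessThan_Suc)

lemma eps_pm: "x \<in> Irr \<Longrightarrow> eps n x = 1 \<or> eps n x = -1"
proof (induction n)
  case 0 then show ?case by (simp add: eps_def)
next
  case (Suc n)
  show ?case
  proof (cases "n = 0")
    case True then show ?thesis by (simp add: eps_def)
  next
    case False
    then obtain p where p: "n = Suc p" by (cases n) auto
    have "sgn_s n x = 1 \<or> sgn_s n x = -1" using s1_pm[OF inv[OF Suc.prems, THEN conjunct1]] p sgn_s_Suc by metis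
    then show ?thesis using eps_Suc[of n x] False Suc by auto
  qed
qed

locale ysetup =
  fixes Y :: "nat \<Rightarrow> real \<Rightarrow> int"
  assumes odd: "\<And>n x. n \<ge> 1 \<Longrightarrow> x \<in> Irr \<Longrightarrow> odd (Y n x)"
    and first: "\<And>x. x \<in> Irr \<Longrightarrow> Y 1 x \<le> dig 1 x \<and> dig 1 x < Y 1 x + 2"
    and same: "\<And>n x. n \<ge> 2 \<Longrightarrow> x \<in> Irr \<Longrightarrow> eps n x = eps (n - 1) x \<Longrightarrow>
         real_of_int (Y n x) \<le> real_of_int (dig n x) / real_of_int (dig (n - 1) x - 1) \<and>
         real_of_int (dig n x) / real_of_int (dig (n - 1) x - 1) < real_of_int (Y n x) + 2"
    and flip: "\<And>n x. n \<ge> 2 \<Longrightarrow> x \<in> Irr \<Longrightarrow> eps n x = - eps (n - 1) x \<Longrightarrow>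
         real_of_int (Y n x) \<le> real_of_int (dig n x) / real_of_int (dig (n - 1) x + 1) \<and>
         real_of_int (dig n x) / real_of_int (dig (n - 1) x + 1) < real_of_int (Y n x) + 2"
begin

lemma Y_bounds:
  assumes x: "x \<in> Irr"
  shows "real_of_int (Y (Suc n) x) \<le> real_of_int (d1 (zz n x)) / real_of_int (mm n x) \<and>
         real_of_int (d1 (zz n x)) / real_of_int (mm n x) < real_of_int (Y (Suc n) x) + 2"
proof (cases n)
  case 0
  then show ?thesis using first[OF x] by (simp add: dig_Suc[of 0, simplified] zz_0)
next
  case (Suc p)
  have zp: "zz p x \<in> Irr" using inv[OF x] by blast
  have e: "eps (Suc (Suc p)) x = eps (Suc p) x * s1 (zz p x)" using eps_Suc[of "Suc p" x] by (simp add: sgn_s_Suc)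
  have dd: "dig (Suc (Suc p)) x = d1 (zz (Suc p) x)" "dig (Suc p) x = d1 (zz p x)" by (simp_all add: dig_Suc)
  have mS: "mm (Suc p) x = d1 (zz p x) - s1 (zz p x)" by simp
  from s1_pm[OF zp] show ?thesis
  proof
    assume s: "s1 (zz p x) = 1"
    have "eps (Suc (Suc p)) x = eps (Suc (Suc p) - 1) x" using e s by simp
    from same[OF _ x this] show ?thesis using dd mS s Suc by simp
  next
    assume s: "s1 (zz p x) = -1"
    have "eps (Suc (Suc p)) x = - eps (Suc (Suc p) - 1) x" using e s by simp
    from flip[OF _ x this] show ?thesis using dd mS s Suc by simp
  qed
qed

lemma Y_eq:
  assumes x: "x \<in> Irr"
  shows "Y (Suc n) x = gg (real_of_int (mm n x) * zz n x)"
proof -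
  define z where "z = zz n x"
  define m where "m = mm n x"
  define a where "a = Y (Suc n) x"
  have I: "z \<in> Irr" "m \<ge> 1" "odd m" using inv[OF x] by (auto simp: z_def m_def)
  have z0: "0 < z" using I by (simp add: Irr_def)
  note S = T_step[OF I(1)]
  define D where "D = d1 z"
  have D: "D = 2 * kk z" "2 * real_of_int (kk z) - 1 < 1 / z" "1 / z < 2 * real_of_int (kk z) + 1"
    using S by (auto simp: D_def)
  have B: "real_of_int a \<le> real_of_int D / real_of_int m" "real_of_int D / real_of_int m < real_of_int a + 2"
    using Y_bounds[OF x, of n] by (auto simp: a_def D_def z_def m_def)
  have mp: "real_of_int m > 0" using I by simp
  have B1: "real_of_int (a * m) \<le> real_of_int D" using B(1) mp by (simp add: field_simps)
  have B2: "real_of_int D < real_of_int ((a + 2) * m)" using B(2) mp by (simp add: field_simps)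
  have oa: "odd a" using odd[OF _ x, of "Suc n"] by (simp add: a_def)
  have "odd (a * m)" using oa I by simp
  moreover have "even D" using D(1) by simp
  ultimately have "a * m \<noteq> D" by auto
  then have C1: "a * m \<le> D - 1" using B1 by linarith
  have "D < (a + 2) * m" using B2 by (simp only: of_int_less_iff)
  then have C2: "D + 1 \<le> (a + 2) * m" by linarith
  have C1': "real_of_int a * real_of_int m \<le> 2 * real_of_int (kk z) - 1" using C1 D(1)
    by (metis of_int_diff of_int_le_iff of_int_mult of_int_numeral of_int_1)
  have C2': "2 * real_of_int (kk z) + 1 \<le> (real_of_int a + 2) * real_of_int m" using C2 D(1)
    by (metis of_int_add of_int_le_iff of_int_mult of_int_numeral of_int_1)
  have "real_of_int a * real_of_int m < 1 / z" using C1' D(2) by linarith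
  then have L: "real_of_int a < 1 / (real_of_int m * z)" using mp z0 by (simp add: field_simps)
  have "1 / z < (real_of_int a + 2) * real_of_int m" using C2' D(3) by linarith
  then have R: "1 / (real_of_int m * z) < real_of_int a + 2" using mp z0 by (simp add: field_simps)
  show ?thesis using gg_char[OF oa L R refl] by (simp add: a_def m_def z_def)
qed

end



lemma rat_borel: "(\<rat> :: real set) \<in> sets borel"
  by (rule sets.countable) (auto simp: countable_rat)

lemma Irr_borel: "Irr \<in> sets borel"
  unfolding Irr_def using rat_borel by auto

lemma sets_M: "A \<subseteq> Irr \<Longrightarrow> A \<in> sets borel \<Longrightarrow> A \<in> sets (lebesgue_on Irr)"
  using Irr_borel by (subst sets_restrict_space_iff) auto

lemma measure_M:
  assumes V: "V \<in> sets borel"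
  shows "measure (lebesgue_on Irr) (Irr \<inter> V) = measure lborel (V \<inter> {0<..<1})"
proof -
  have "measure (lebesgue_on Irr) (Irr \<inter> V) = measure lebesgue (Irr \<inter> V)"
    using Irr_borel by (intro measure_restrict_space) auto
  also have "... = measure lborel (Irr \<inter> V)" using Irr_borel V by (intro measure_completion) auto
  also have "measure lborel (Irr \<inter> V) = measure lborel ((V \<inter> {0<..<1}) - \<rat>)"
    by (rule arg_cong[where f="measure lborel"]) (auto simp: Irr_def)
  also have "measure lborel ((V \<inter> {0<..<1}) - \<rat>) = measure lborel (V \<inter> {0<..<1})"
    using V by (intro measure_Diff_null_set countable_imp_null_set_lborel) (auto simp: countable_rat)
  finally show ?thesis .
qed

lemma emeasure_M_Irr: "emeasure (lebesgue_on Irr) Irr = 1"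
proof -
  have "emeasure (lebesgue_on Irr) Irr = emeasure lebesgue Irr"
    using Irr_borel by (intro emeasure_restrict_space) auto
  also have "... = emeasure lborel Irr" using Irr_borel by (simp add: main_part_sets)
  also have "emeasure lborel Irr = emeasure lborel ({0<..<1} - (\<rat>::real set))"
    by (simp add: Irr_def)
  also have "emeasure lborel ({0<..<1} - (\<rat>::real set)) = emeasure lborel {0<..<(1::real)}"
    by (intro emeasure_Diff_null_set countable_imp_null_set_lborel) (auto simp: countable_rat)
  finally show ?thesis by simp
qed

lemma prob_M: "prob_space (lebesgue_on Irr)"
  by (rule prob_spaceI) (simp add: emeasure_M_Irr)

lemma affine_measure:
  fixes c b :: real
  assumes c: "c \<noteq> 0" and A: "A \<in> sets borel"
  shows "measure lborel ((\<lambda>x. b + c * x) -` A) = measure lborel A / \<bar>c\<bar>"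
proof -
  have m: "(\<lambda>x. b + c * x) \<in> borel_measurable borel" by measurable
  have "emeasure lborel A = emeasure (density (distr lborel borel (\<lambda>x. b + c * x)) (\<lambda>_. ennreal \<bar>c\<bar>)) A"
    using lborel_real_affine[OF c, of b] by simp
  also have "... = ennreal \<bar>c\<bar> * emeasure (distr lborel borel (\<lambda>x. b + c * x)) A"
    using A m by (simp add: emeasure_density nn_integral_cmult_indicator)
  also have "... = ennreal \<bar>c\<bar> * emeasure lborel ((\<lambda>x. b + c * x) -` A)"
    using A m by (simp add: emeasure_distr)
  finally have e: "emeasure lborel A = ennreal \<bar>c\<bar> * emeasure lborel ((\<lambda>x. b + c * x) -` A)" .
  have "measure lborel A = \<bar>c\<bar> * measure lborel ((\<lambda>x. b + c * x) -` A)"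
    unfolding measure_def e by (simp add: enn2real_mult)
  then show ?thesis using c by simp
qed



lemma floor_const:
  fixes a b t1 t2 :: real
  assumes nj: "\<And>j::int. \<not> (a < 2 * real_of_int j - 1 \<and> 2 * real_of_int j - 1 < b)"
    and h: "a < t1" "t1 < b" "a < t2" "t2 < b"
  shows "\<lfloor>(t1 + 1) / 2\<rfloor> = \<lfloor>(t2 + 1) / 2\<rfloor>"
proof -
  have main: "\<not> \<lfloor>(s1 + 1) / 2\<rfloor> < \<lfloor>(s2 + 1) / 2\<rfloor>" if "a < s1" "s1 < b" "a < s2" "s2 < b" for s1 s2 :: real
  proof
    assume lt: "\<lfloor>(s1 + 1) / 2\<rfloor> < \<lfloor>(s2 + 1) / 2\<rfloor>"
    define q1 where "q1 = \<lfloor>(s1 + 1) / 2\<rfloor>"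
    define q2 where "q2 = \<lfloor>(s2 + 1) / 2\<rfloor>"
    have a1: "(s1 + 1) / 2 < real_of_int q1 + 1" unfolding q1_def by linarith
    have a2: "real_of_int q2 \<le> (s2 + 1) / 2" unfolding q2_def by linarith
    have b1: "s1 < 2 * real_of_int q1 + 1" using a1 by (simp add: field_simps)
    have b2: "2 * real_of_int q2 - 1 \<le> s2" using a2 by (simp add: field_simps)
    have "q1 + 1 \<le> q2" using lt unfolding q1_def q2_def by simp
    then have "2 * real_of_int q1 + 1 \<le> 2 * real_of_int q2 - 1" by (simp add: algebra_simps)
    then have "a < 2 * real_of_int q2 - 1 \<and> 2 * real_of_int q2 - 1 < b" using b1 b2 that by linarith
    then show False using nj by blast
  qed
  show ?thesis using main[of t1 t2] main[of t2 t1] h by linarith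
qed

lemma gg_piece:
  fixes z1 z2 :: real and m L :: int
  assumes m: "m \<ge> 1" and z: "z1 > 0" "z2 > 0"
    and h: "L < 1 / z1" "1 / z1 < L + 1" "L < 1 / z2" "1 / z2 < L + 1"
  shows "gg (m * z1) = gg (m * z2)"
proof -
  have mp: "real_of_int m > 0" using m by simp
  have nj: "\<not> (L / m < 2 * real_of_int j - 1 \<and> 2 * real_of_int j - 1 < (L + 1) / m)" for j :: int
  proof
    assume "L / m < 2 * real_of_int j - 1 \<and> 2 * real_of_int j - 1 < (L + 1) / m"
    then have "real_of_int L < real_of_int ((2 * j - 1) * m)" "real_of_int ((2 * j - 1) * m) < real_of_int (L + 1)" using mp by (auto simp: field_simps)
    then have "L < (2 * j - 1) * m" "(2 * j - 1) * m < L + 1" by (simp_all only: of_int_less_iff)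
    then show False by linarith
  qed
  have e: "1 / (m * z) = (1 / z) / m" for z :: real by simp
  have "L / m < (1 / z1) / m" "(1 / z1) / m < (L + 1) / m" "L / m < (1 / z2) / m" "(1 / z2) / m < (L + 1) / m"
    using h mp by (simp_all only: divide_strict_right_mono)
  then have "L / m < 1 / (m * z1)" "1 / (m * z1) < (L + 1) / m" "L / m < 1 / (m * z2)" "1 / (m * z2) < (L + 1) / m"
    by (simp_all only: e)
  from floor_const[OF nj this] show ?thesis unfolding gg_def by simp
qed

lemma inv_iff:
  fixes z a :: real
  assumes "z > 0" "a > 0"
  shows "(1 / a < z \<longleftrightarrow> 1 / z < a)" "(z < 1 / a \<longleftrightarrow> a < 1 / z)"
  using assms by (auto simp: field_simps)

lemma piece1:
  fixes z :: real and m' :: int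
  assumes z: "z \<in> Irr" and m': "odd m'" "m' \<ge> 1"
  shows "(m' < 1 / z \<and> 1 / z < m' + 1) \<longleftrightarrow> (s1 z = 1 \<and> d1 z - s1 z = m')"
proof -
  note S = T_step[OF z]
  define k where "k = kk z"
  show ?thesis
  proof (cases "s1 z = 1")
    case True
    then have a: "2 * real_of_int k - 1 < 1 / z" "1 / z < 2 * real_of_int k" "d1 z = 2 * k" using S by (auto simp: k_def)
    show ?thesis
    proof
      assume "m' < 1 / z \<and> 1 / z < m' + 1"
      then have "real_of_int m' < 2 * real_of_int k" "2 * real_of_int k - 1 < real_of_int m' + 1" using a by linarith+
      then have "m' < 2 * k" "2 * k - 1 < m' + 1" by linarith+
      then have "m' = 2 * k - 1" by linarith
      then show "s1 z = 1 \<and> d1 z - s1 z = m'" using True a by simp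
    next
      assume "s1 z = 1 \<and> d1 z - s1 z = m'"
      then have "m' = 2 * k - 1" using a by simp
      then show "m' < 1 / z \<and> 1 / z < m' + 1" using a by simp
    qed
  next
    case False
    then have a: "2 * real_of_int k < 1 / z" "1 / z < 2 * real_of_int k + 1" using S by (auto simp: k_def)
    have "\<not> (m' < 1 / z \<and> 1 / z < m' + 1)"
    proof
      assume "m' < 1 / z \<and> 1 / z < m' + 1"
      then have "real_of_int m' < 2 * real_of_int k + 1" "2 * real_of_int k < real_of_int m' + 1" using a by linarith+
      then have "m' < 2 * k + 1" "2 * k < m' + 1" by linarith+
      then have "m' = 2 * k" by linarith
      then show False using m' by simp
    qed
    then show ?thesis using False by simp
  qed
qed

lemma piece2:
  fixes z :: real and m' :: int
  assumes z: "z \<in> Irr" and m': "odd m'" "m' \<ge> 1"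
  shows "(m' - 1 < 1 / z \<and> 1 / z < m') \<longleftrightarrow> (s1 z = -1 \<and> d1 z - s1 z = m')"
proof -
  note S = T_step[OF z]
  define k where "k = kk z"
  have k1: "k \<ge> 1" using S by (simp add: k_def)
  show ?thesis
  proof (cases "s1 z = 1")
    case False
    then have F: "s1 z = -1" using S by auto
    then have a: "2 * real_of_int k < 1 / z" "1 / z < 2 * real_of_int k + 1" "d1 z = 2 * k" using S by (auto simp: k_def)
    show ?thesis
    proof
      assume "m' - 1 < 1 / z \<and> 1 / z < m'"
      then have "real_of_int m' - 1 < 2 * real_of_int k + 1" "2 * real_of_int k < real_of_int m'" using a by linarith+
      then have "m' - 1 < 2 * k + 1" "2 * k < m'" by linarith+
      then have "m' = 2 * k + 1" by linarith
      then show "s1 z = -1 \<and> d1 z - s1 z = m'" using F a by simp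
    next
      assume "s1 z = -1 \<and> d1 z - s1 z = m'"
      then have "m' = 2 * k + 1" using a by simp
      then show "m' - 1 < 1 / z \<and> 1 / z < m'" using a by simp
    qed
  next
    case True
    then have a: "2 * real_of_int k - 1 < 1 / z" "1 / z < 2 * real_of_int k" using S by (auto simp: k_def)
    have "\<not> (m' - 1 < 1 / z \<and> 1 / z < m')"
    proof
      assume "m' - 1 < 1 / z \<and> 1 / z < m'"
      then have "real_of_int m' - 1 < 2 * real_of_int k" "2 * real_of_int k - 1 < real_of_int m'" using a by linarith+
      then have "m' - 1 < 2 * k" "2 * k - 1 < m'" by linarith+
      then have "m' = 2 * k" by linarith
      then show False using m' by simp
    qed
    then show ?thesis using True by simp
  qed
qed

lemma Tmap_piece:
  assumes z: "z \<in> Irr"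
  shows "s1 z = 1 \<Longrightarrow> Tmap z = real_of_int (d1 z - s1 z + 1) * z - 1"
    "s1 z = -1 \<Longrightarrow> Tmap z = 1 - real_of_int (d1 z - s1 z - 1) * z"
  using T_step[OF z] by auto



definition c1 :: "int \<Rightarrow> real" where "c1 m' = (1 / (m' + 1) + 1 / m') / 2"
definition c2 :: "int \<Rightarrow> real" where "c2 m' = (1 / m' + 1 / (m' - 1)) / 2"

definition W :: "int \<Rightarrow> int \<Rightarrow> int set \<Rightarrow> real set \<Rightarrow> real set" where
  "W m m' Bs V =
     (if m \<le> m' \<and> gg (m * c1 m') \<in> Bs then {z. 1 / (m' + 1) < z \<and> z < 1 / m' \<and> (m' + 1) * z - 1 \<in> V} else {}) \<union>
     (if m + 2 \<le> m' \<and> gg (m * c2 m') \<in> Bs then {z. 1 / m' < z \<and> z < 1 / (m' - 1) \<and> 1 - (m' - 1) * z \<in> V} else {})"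

lemma zt1:
  fixes z :: real and m' :: int
  assumes "z > 0" "m' \<ge> 1"
  shows "(1 / (m' + 1) < z \<and> z < 1 / m') \<longleftrightarrow> (m' < 1 / z \<and> 1 / z < m' + 1)"
  using assms by (auto simp: field_simps)

lemma zt2:
  fixes z :: real and m' :: int
  assumes "z > 0" "m' \<ge> 2"
  shows "(1 / m' < z \<and> z < 1 / (m' - 1)) \<longleftrightarrow> (m' - 1 < 1 / z \<and> 1 / z < m')"
proof -
  have "real_of_int m' - 1 > 0" using assms by simp
  then show ?thesis using assms by (auto simp: field_simps)
qed

lemma mid: "(a::real) < b \<Longrightarrow> a < (a + b) / 2 \<and> (a + b) / 2 < b"
  by (simp add: field_simps)

lemma c1_in: "m' \<ge> 1 \<Longrightarrow> 1 / (real_of_int m' + 1) < c1 m' \<and> c1 m' < 1 / real_of_int m'"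
proof -
  assume "m' \<ge> 1"
  then have "1 / (real_of_int m' + 1) < 1 / real_of_int m'" by (simp add: frac_less2)
  then show ?thesis unfolding c1_def by (rule mid)
qed

lemma c2_in: "m' \<ge> 2 \<Longrightarrow> 1 / real_of_int m' < c2 m' \<and> c2 m' < 1 / (real_of_int m' - 1)"
proof -
  assume "m' \<ge> 2"
  then have "1 / real_of_int m' < 1 / (real_of_int m' - 1)" by (simp add: frac_less2)
  then show ?thesis unfolding c2_def by (rule mid)
qed

context ysetup
begin

definition AA :: "nat \<Rightarrow> (nat \<Rightarrow> int set) \<Rightarrow> int \<Rightarrow> real set" where
  "AA n B m = {x \<in> Irr. (\<forall>i\<in>{1..n}. Y i x \<in> B i) \<and> mm n x = m}"

lemma set_eq_step:
  assumes m': "odd m'" "m' \<ge> 1"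
  shows "AA (Suc n) B m' \<inter> {x. zz (Suc n) x \<in> V} =
         (\<Union>m\<in>{1..m'}. AA n B m \<inter> {x. zz n x \<in> W m m' (B (Suc n)) V})"
proof (intro equalityI subsetI)
  fix x assume "x \<in> AA (Suc n) B m' \<inter> {x. zz (Suc n) x \<in> V}"
  then have x: "x \<in> Irr" and HB: "\<forall>i\<in>{1..Suc n}. Y i x \<in> B i" and hm': "mm (Suc n) x = m'"
    and hV: "Tmap (zz n x) \<in> V" by (auto simp: AA_def zz_Suc)
  define z where "z = zz n x"
  define m where "m = mm n x"
  have I: "z \<in> Irr" "m \<ge> 1" "odd m" "real_of_int m * z < 1" using inv[OF x, of n] by (auto simp: z_def m_def)
  have z0: "0 < z" "z < 1" using I by (auto simp: Irr_def)
  have "Y (Suc n) x \<in> B (Suc n)" using HB by simp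
  then have hY: "gg (m * z) \<in> B (Suc n)" using Y_eq[OF x, of n] by (simp add: z_def m_def)
  have hd: "d1 z - s1 z = m'" using hm' by (simp add: z_def)
  have AAn: "x \<in> AA n B m" using x HB by (auto simp: AA_def m_def)
  have mp: "real_of_int m > 0" using I by simp
  have "z \<in> W m m' (B (Suc n)) V \<and> m \<le> m'"
  proof (cases "s1 z = 1")
    case True
    have t: "m' < 1 / z \<and> 1 / z < m' + 1" using piece1[OF I(1) m'] True hd by simp
    then have p: "1 / (m' + 1) < z \<and> z < 1 / m'" using zt1[OF z0(1) m'(2)] by simp
    have T: "Tmap z = (m' + 1) * z - 1" using Tmap_piece(1)[OF I(1) True] hd by simp
    have "real_of_int m * (1 / (m' + 1)) < real_of_int m * z" using p mp by (intro mult_strict_left_mono) auto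
    then have "real_of_int m / (m' + 1) < 1" using I(4) by simp
    then have "real_of_int m < real_of_int m' + 1" using m' by (simp add: field_simps)
    then have le: "m \<le> m'" by linarith
    have "1 / (real_of_int m' + 1) > 0" using m'(2) by simp
    then have c1p: "c1 m' > 0" using c1_in[OF m'(2)] by linarith
    have c: "m' < 1 / c1 m' \<and> 1 / c1 m' < m' + 1" using zt1[OF c1p m'(2)] c1_in[OF m'(2)] by simp
    have "gg (m * c1 m') = gg (m * z)"
      by (rule gg_piece[OF I(2) c1p z0(1), of m']) (use c t in simp_all)
    then show ?thesis using hY le p T hV unfolding W_def z_def by auto
  next
    case False

    then have F: "s1 z = -1" using s1_pm[OF I(1)] by auto
    have t: "m' - 1 < 1 / z \<and> 1 / z < m'" using piece2[OF I(1) m'] F hd by simp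
    have "1 / z > 1" using z0 by simp
    then have "real_of_int m' > 1" using t by linarith
    then have m'2: "m' \<ge> 2" by simp
    have p: "1 / m' < z \<and> z < 1 / (m' - 1)" using zt2[OF z0(1) m'2] t by simp
    have T: "Tmap z = 1 - (m' - 1) * z" using Tmap_piece(2)[OF I(1) F] hd by simp
    have "real_of_int m * (1 / m') < real_of_int m * z" using p mp by (intro mult_strict_left_mono) auto
    then have "real_of_int m / m' < 1" using I(4) by simp
    then have "real_of_int m < real_of_int m'" using m'2 by (simp add: field_simps)
    then have "m < m'" by simp
    then have le: "m + 2 \<le> m'" using I(3) m'(1) by presburger
    have "1 / real_of_int m' > 0" using m'2 by simp
    then have c2p: "c2 m' > 0" using c2_in[OF m'2] by linarith
    have c: "m' - 1 < 1 / c2 m' \<and> 1 / c2 m' < m'" using zt2[OF c2p m'2] c2_in[OF m'2] by simp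
    have "gg (m * c2 m') = gg (m * z)"
      by (rule gg_piece[OF I(2) c2p z0(1), of "m' - 1"]) (use c t in simp_all)
    then show ?thesis using hY le p T hV unfolding W_def z_def by auto
  qed
  then show "x \<in> (\<Union>m\<in>{1..m'}. AA n B m \<inter> {x. zz n x \<in> W m m' (B (Suc n)) V})"
    using AAn I(2) by (auto simp: z_def)
next
  fix x assume "x \<in> (\<Union>m\<in>{1..m'}. AA n B m \<inter> {x. zz n x \<in> W m m' (B (Suc n)) V})"
  then obtain m where mr: "1 \<le> m" "m \<le> m'" and AAn: "x \<in> AA n B m" and zW: "zz n x \<in> W m m' (B (Suc n)) V"
    by auto
  have x: "x \<in> Irr" and HB: "\<forall>i\<in>{1..n}. Y i x \<in> B i" and hm: "mm n x = m" using AAn by (auto simp: AA_def)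
  define z where "z = zz n x"
  have I: "z \<in> Irr" "odd m" "real_of_int m * z < 1" using inv[OF x, of n] hm by (auto simp: z_def)
  have z0: "0 < z" "z < 1" using I by (auto simp: Irr_def)
  have YS: "Y (Suc n) x = gg (m * z)" using Y_eq[OF x, of n] hm by (simp add: z_def)
  have goal: "x \<in> AA (Suc n) B m' \<inter> {x. zz (Suc n) x \<in> V}"
    if h: "Y (Suc n) x \<in> B (Suc n)" "d1 z - s1 z = m'" "Tmap z \<in> V"
  proof -
    have "\<forall>i\<in>{1..Suc n}. Y i x \<in> B i" using HB h(1) by (auto simp: le_Suc_eq)
    then show ?thesis using x h by (simp add: AA_def zz_Suc z_def)
  qed
  have "z \<in> W m m' (B (Suc n)) V" using zW by (simp add: z_def)
  then consider
      (A) "gg (m * c1 m') \<in> B (Suc n)" "1 / (m' + 1) < z \<and> z < 1 / m'" "(m' + 1) * z - 1 \<in> V"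
    | (B) "m + 2 \<le> m'" "gg (m * c2 m') \<in> B (Suc n)" "1 / m' < z \<and> z < 1 / (m' - 1)" "1 - (m' - 1) * z \<in> V"
    unfolding W_def by (auto split: if_splits)
  then show "x \<in> AA (Suc n) B m' \<inter> {x. zz (Suc n) x \<in> V}"
  proof cases
    case A
    have t: "m' < 1 / z \<and> 1 / z < m' + 1" using zt1[OF z0(1) m'(2)] A(2) by simp
    have s: "s1 z = 1" "d1 z - s1 z = m'" using piece1[OF I(1) m'] t by auto
    have T: "Tmap z = (m' + 1) * z - 1" using Tmap_piece(1)[OF I(1) s(1)] s(2) by simp
    have "1 / (real_of_int m' + 1) > 0" using m'(2) by simp
    then have c1p: "c1 m' > 0" using c1_in[OF m'(2)] by linarith
    have c: "m' < 1 / c1 m' \<and> 1 / c1 m' < m' + 1" using zt1[OF c1p m'(2)] c1_in[OF m'(2)] by simp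
    have "gg (m * c1 m') = gg (m * z)"
      by (rule gg_piece[OF mr(1) c1p z0(1), of m']) (use c t in simp_all)
    then show ?thesis using goal A YS s T by simp
  next
    case B
    have m'2: "m' \<ge> 2" using B(1) mr by simp
    have t: "m' - 1 < 1 / z \<and> 1 / z < m'" using zt2[OF z0(1) m'2] B(3) by simp
    have s: "s1 z = -1" "d1 z - s1 z = m'" using piece2[OF I(1) m'] t by auto
    have T: "Tmap z = 1 - (m' - 1) * z" using Tmap_piece(2)[OF I(1) s(1)] s(2) by simp
    have "1 / real_of_int m' > 0" using m'2 by simp
    then have c2p: "c2 m' > 0" using c2_in[OF m'2] by linarith
    have c: "m' - 1 < 1 / c2 m' \<and> 1 / c2 m' < m'" using zt2[OF c2p m'2] c2_in[OF m'2] by simp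
    have "gg (m * c2 m') = gg (m * z)"
      by (rule gg_piece[OF mr(1) c2p z0(1), of "m' - 1"]) (use c t in simp_all)
    then show ?thesis using goal B YS s T by simp
  qed
qed

end



lemma fin_lborel: "A \<subseteq> {a..b} \<Longrightarrow> emeasure lborel (A :: real set) \<noteq> \<infinity>"
proof -
  assume "A \<subseteq> {a..b}"
  then have "emeasure lborel A \<le> emeasure lborel {a..b}" by (intro emeasure_mono) auto
  moreover have "emeasure lborel {a..b} < \<infinity>" by (cases "a \<le> b") auto
  ultimately show ?thesis by (auto simp: top_unique)
qed

definition kap :: "int \<Rightarrow> int \<Rightarrow> int set \<Rightarrow> real" where
  "kap m m' Bs = (if m \<le> m' \<and> gg (m * c1 m') \<in> Bs then 1 / (m' + 1) else 0) +
                 (if m + 2 \<le> m' \<and> gg (m * c2 m') \<in> Bs then 1 / (m' - 1) else 0)"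

lemma P1r:
  fixes r :: real assumes r: "r > 0"
  shows "{z. 1 / (r + 1) < z \<and> z < 1 / r \<and> (r + 1) * z - 1 \<in> V} =
         (\<lambda>z. (r + 1) * z - 1) -` (V \<inter> {0<..<1 / r})"
proof -
  have r1: "r + 1 > 0" using r by simp
  have key: "(1 / (r + 1) < z \<and> z < 1 / r) \<longleftrightarrow> (0 < (r + 1) * z - 1 \<and> (r + 1) * z - 1 < 1 / r)" for z :: real
  proof -
    have a: "(1 / (r + 1) < z) \<longleftrightarrow> (1 < z * (r + 1))" using r1 by (simp add: divide_less_eq)
    have a2: "(1 < z * (r + 1)) \<longleftrightarrow> (0 < (r + 1) * z - 1)" by (simp add: algebra_simps)
    have e: "(r + 1) * (1 / r) = 1 + 1 / r" using r by (simp add: field_simps)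
    have b: "((r + 1) * z - 1 < 1 / r) \<longleftrightarrow> ((r + 1) * z < (r + 1) * (1 / r))"
      unfolding e by (rule iffI; linarith)
    have c: "((r + 1) * z < (r + 1) * (1 / r)) \<longleftrightarrow> z < 1 / r" using r1 by (rule mult_less_cancel_left_pos)
    show ?thesis using a a2 b c by blast
  qed
  show ?thesis
  proof (rule set_eqI)
    fix z
    show "z \<in> {z. 1 / (r + 1) < z \<and> z < 1 / r \<and> (r + 1) * z - 1 \<in> V} \<longleftrightarrow> z \<in> (\<lambda>z. (r + 1) * z - 1) -` (V \<inter> {0<..<1 / r})"
      using key[of z] by (simp only: mem_Collect_eq vimage_eq Int_iff greaterThanLessThan_iff) blast
  qed
qed

lemma P2r:
  fixes r :: real assumes r: "r > 1"
  shows "{z. 1 / r < z \<and> z < 1 / (r - 1) \<and> 1 - (r - 1) * z \<in> V} =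
         (\<lambda>z. 1 - (r - 1) * z) -` (V \<inter> {0<..<1 / r})"
proof -
  have r1: "r - 1 > 0" using r by simp
  have key: "(1 / r < z \<and> z < 1 / (r - 1)) \<longleftrightarrow> (0 < 1 - (r - 1) * z \<and> 1 - (r - 1) * z < 1 / r)" for z :: real
  proof -
    have a: "(z < 1 / (r - 1)) \<longleftrightarrow> (z * (r - 1) < 1)" using r1 by (simp add: less_divide_eq)
    have a2: "(z * (r - 1) < 1) \<longleftrightarrow> (0 < 1 - (r - 1) * z)" by (simp add: algebra_simps)
    have e: "(r - 1) * (1 / r) = 1 - 1 / r" using r by (simp add: field_simps)
    have b: "(1 - (r - 1) * z < 1 / r) \<longleftrightarrow> ((r - 1) * (1 / r) < (r - 1) * z)"
      unfolding e by (rule iffI; linarith)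
    have c: "((r - 1) * (1 / r) < (r - 1) * z) \<longleftrightarrow> 1 / r < z" using r1 by (rule mult_less_cancel_left_pos)
    show ?thesis using a a2 b c by blast
  qed
  show ?thesis
  proof (rule set_eqI)
    fix z
    show "z \<in> {z. 1 / r < z \<and> z < 1 / (r - 1) \<and> 1 - (r - 1) * z \<in> V} \<longleftrightarrow> z \<in> (\<lambda>z. 1 - (r - 1) * z) -` (V \<inter> {0<..<1 / r})"
      using key[of z] by (simp only: mem_Collect_eq vimage_eq Int_iff greaterThanLessThan_iff) blast
  qed
qed

lemma W_props:
  assumes m: "m \<ge> 1" and m': "m' \<ge> 1" and V: "V \<in> sets borel"
  shows "W m m' Bs V \<in> sets borel" "W m m' Bs V \<subseteq> {0<..<1 / real_of_int m}"
    "measure lborel (W m m' Bs V) = kap m m' Bs * measure lborel (V \<inter> {0<..<1 / real_of_int m'})"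
proof -
  define V' where "V' = V \<inter> {0<..<1 / real_of_int m'}"
  have V': "V' \<in> sets borel" using V by (simp add: V'_def)
  define r where "r = real_of_int m'"
  have r1: "r \<ge> 1" using m' by (simp add: r_def)
  define Q1 where "Q1 = {z::real. 1 / (r + 1) < z \<and> z < 1 / r \<and> (r + 1) * z - 1 \<in> V}"
  define Q2 where "Q2 = {z::real. 1 / r < z \<and> z < 1 / (r - 1) \<and> 1 - (r - 1) * z \<in> V}"
  define b1 where "b1 = (m \<le> m' \<and> gg (m * c1 m') \<in> Bs)"
  define b2 where "b2 = (m + 2 \<le> m' \<and> gg (m * c2 m') \<in> Bs)"
  have Wd: "W m m' Bs V = (if b1 then Q1 else {}) \<union> (if b2 then Q2 else {})"
    unfolding W_def Q1_def Q2_def b1_def b2_def r_def by simp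
  have f1: "(\<lambda>z. (r + 1) * z - 1) = (\<lambda>z. -1 + (r + 1) * z)" by (simp add: fun_eq_iff)
  have Q1e: "Q1 = (\<lambda>z. -1 + (r + 1) * z) -` V'" unfolding Q1_def V'_def r_def[symmetric] f1[symmetric]
    using r1 by (intro P1r) simp
  have Q1b: "Q1 \<in> sets borel" unfolding Q1e using V' by (intro measurable_sets_borel[OF _ V']) auto
  have Q1m: "measure lborel Q1 = measure lborel V' / (m' + 1)"
    unfolding Q1e using affine_measure[OF _ V', of "r + 1" "-1"] r1 by (simp add: r_def)
  have Q1s: "Q1 \<subseteq> {1 / (m' + 1) .. 1 / m'}" unfolding Q1_def r_def by auto
  have f2: "(\<lambda>z. 1 - (r - 1) * z) = (\<lambda>z. 1 + (- (r - 1)) * z)" by (simp add: fun_eq_iff algebra_simps)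
  have Q2b: "b2 \<Longrightarrow> Q2 \<in> sets borel"
  proof -
    assume b2 then have m2: "r > 1" using m by (simp add: b2_def r_def)
    have Q2e: "Q2 = (\<lambda>z. 1 + (- (r - 1)) * z) -` V'" unfolding Q2_def V'_def r_def[symmetric] f2[symmetric]
      using m2 by (intro P2r) simp
    show ?thesis unfolding Q2e using V' by (intro measurable_sets_borel[OF _ V']) auto
  qed
  have Q2m: "b2 \<Longrightarrow> measure lborel Q2 = measure lborel V' / (m' - 1)"
  proof -
    assume b2 then have m2: "r > 1" using m by (simp add: b2_def r_def)
    have Q2e: "Q2 = (\<lambda>z. 1 + (- (r - 1)) * z) -` V'" unfolding Q2_def V'_def r_def[symmetric] f2[symmetric]
      using m2 by (intro P2r) simp
    show ?thesis unfolding Q2e using affine_measure[OF _ V', of "- (r - 1)" "1"] m2 by (simp add: r_def)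
  qed
  have Q2s: "Q2 \<subseteq> {1 / m' .. 1 / (m' - 1)}" unfolding Q2_def r_def by auto
  have disj: "Q1 \<inter> Q2 = {}" unfolding Q1_def Q2_def by auto
  show "W m m' Bs V \<in> sets borel" unfolding Wd using Q1b Q2b by auto
  have s1: "b1 \<Longrightarrow> Q1 \<subseteq> {0<..<1 / real_of_int m}"
  proof
    fix z assume b1 and z: "z \<in> Q1"
    then have "m \<le> m'" by (simp add: b1_def)
    then have "1 / real_of_int m' \<le> 1 / real_of_int m" using m by (simp add: frac_le)
    moreover have "0 < 1 / (real_of_int m' + 1)" using m' by simp
    moreover have "1 / (real_of_int m' + 1) < z" "z < 1 / real_of_int m'" using z unfolding Q1_def r_def by auto
    ultimately show "z \<in> {0<..<1 / real_of_int m}" by (simp only: greaterThanLessThan_iff) linarith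
  qed
  have s2: "b2 \<Longrightarrow> Q2 \<subseteq> {0<..<1 / real_of_int m}"
  proof
    fix z assume b2 and z: "z \<in> Q2"
    then have "m + 1 \<le> m' - 1" by (simp add: b2_def)
    then have "1 / (real_of_int m' - 1) < 1 / real_of_int m" using m by (simp add: frac_less2)
    moreover have "0 < 1 / (real_of_int m')" using m' by simp
    moreover have "1 / real_of_int m' < z" "z < 1 / (real_of_int m' - 1)" using z unfolding Q2_def r_def by auto
    ultimately show "z \<in> {0<..<1 / real_of_int m}" by (simp only: greaterThanLessThan_iff) linarith
  qed
  show "W m m' Bs V \<subseteq> {0<..<1 / real_of_int m}" unfolding Wd using s1 s2 by auto
  define R1 where "R1 = (if b1 then Q1 else {})"
  define R2 where "R2 = (if b2 then Q2 else {})"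
  have R1b: "R1 \<in> sets lborel" using Q1b by (simp add: R1_def)
  have R2b: "R2 \<in> sets lborel" using Q2b by (simp add: R2_def)
  have R1f: "emeasure lborel R1 \<noteq> \<infinity>" by (rule fin_lborel[of _ "1 / (m' + 1)" "1 / m'"]) (use Q1s in \<open>auto simp: R1_def\<close>)
  have R2f: "emeasure lborel R2 \<noteq> \<infinity>" by (rule fin_lborel[of _ "1 / m'" "1 / (m' - 1)"]) (use Q2s in \<open>auto simp: R2_def\<close>)
  have Rd: "R1 \<inter> R2 = {}" using disj by (auto simp: R1_def R2_def)
  have eW: "measure lborel (W m m' Bs V) = measure lborel R1 + measure lborel R2"
    unfolding Wd R1_def[symmetric] R2_def[symmetric] by (rule measure_Union[OF R1f R2f R1b R2b Rd])
  have e1: "measure lborel R1 = (if b1 then 1 / (m' + 1) else 0) * measure lborel V'"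
    by (cases b1) (simp_all add: R1_def Q1m)
  have e2: "measure lborel R2 = (if b2 then 1 / (m' - 1) else 0) * measure lborel V'"
    by (cases b2) (simp_all add: R2_def Q2m)
  have e3: "(if b1 then 1 / (m' + 1) else 0) * measure lborel V' + (if b2 then 1 / (m' - 1) else 0) * measure lborel V'
      = kap m m' Bs * measure lborel V'"
    unfolding kap_def b1_def[symmetric] b2_def[symmetric] by (simp add: distrib_right)
  have "measure lborel (W m m' Bs V) = kap m m' Bs * measure lborel V'"
    unfolding eW e1 e2 e3 ..
  then show "measure lborel (W m m' Bs V) = kap m m' Bs * measure lborel (V \<inter> {0<..<1 / real_of_int m'})"
    by (simp only: V'_def)
qed



lemma fm_M: "finite_measure (lebesgue_on Irr)"
  using prob_M by (simp add: prob_space_def)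

lemma emeasure_M_fin: "emeasure (lebesgue_on Irr) A \<noteq> \<infinity>"
  using finite_measure.emeasure_finite[OF fm_M] by simp

context ysetup
begin

lemma AA_sub: "AA n B m \<subseteq> Irr" by (auto simp: AA_def)

lemma AA_empty: "\<not> (odd m \<and> m \<ge> 1) \<Longrightarrow> AA n B m = {}"
  using inv by (auto simp: AA_def)

lemma AA_0: "AA 0 B m = (if m = 1 then Irr else {})"
  by (auto simp: AA_def)

lemma K:
  assumes V: "V \<in> sets borel"
  shows "AA n B m \<inter> {x. zz n x \<in> V} \<in> sets (lebesgue_on Irr) \<and>
         measure (lebesgue_on Irr) (AA n B m \<inter> {x. zz n x \<in> V}) =
           m * measure lborel (V \<inter> {0<..<1 / real_of_int m}) * measure (lebesgue_on Irr) (AA n B m)"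
  using V
proof (induction n arbitrary: B m V)
  case 0
  show ?case
  proof (cases "m = 1")
    case True
    have e: "AA 0 B m \<inter> {x. zz 0 x \<in> V} = Irr \<inter> V" using True by (auto simp: AA_0 zz_0)
    have "Irr \<inter> V \<in> sets (lebesgue_on Irr)" using 0 Irr_borel by (intro sets_M) auto
    moreover have "measure (lebesgue_on Irr) (Irr \<inter> V) = measure lborel (V \<inter> {0<..<1})" using measure_M[OF 0] .
    moreover have "measure (lebesgue_on Irr) Irr = 1" using measure_M[of UNIV] by simp
    ultimately show ?thesis using True e by (simp add: AA_0)
  next
    case False
    then show ?thesis by (simp add: AA_0)
  qed
next
  case (Suc n)
  show ?case
  proof (cases "odd m \<and> m \<ge> 1")
    case False
    then show ?thesis using AA_empty[OF False] by simp
  next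
    case True
    then have m': "odd m" "m \<ge> 1" by auto
    define S where "S = (\<Sum>j\<in>{1..m}. j * kap j m (B (Suc n)) * measure (lebesgue_on Irr) (AA n B j))"
    have gen: "AA (Suc n) B m \<inter> {x. zz (Suc n) x \<in> U} \<in> sets (lebesgue_on Irr) \<and>
       measure (lebesgue_on Irr) (AA (Suc n) B m \<inter> {x. zz (Suc n) x \<in> U}) = measure lborel (U \<inter> {0<..<1 / real_of_int m}) * S"
      if U: "U \<in> sets borel" for U
    proof -
      define P where "P j = AA n B j \<inter> {x. zz n x \<in> W j m (B (Suc n)) U}" for j
      have e: "AA (Suc n) B m \<inter> {x. zz (Suc n) x \<in> U} = (\<Union>j\<in>{1..m}. P j)"
        unfolding P_def by (rule set_eq_step[OF m'])
      have Wp: "j \<in> {1..m} \<Longrightarrow> W j m (B (Suc n)) U \<in> sets borel \<and> W j m (B (Suc n)) U \<subseteq> {0<..<1 / real_of_int j} \<and>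
          measure lborel (W j m (B (Suc n)) U) = kap j m (B (Suc n)) * measure lborel (U \<inter> {0<..<1 / real_of_int m})" for j
        using W_props[of j m U "B (Suc n)"] U m' by auto
      have Pm: "P j \<in> sets (lebesgue_on Irr)" if "j \<in> {1..m}" for j
        using Suc.IH[of "W j m (B (Suc n)) U" B j] Wp[OF that] unfolding P_def by blast
      have Pv: "measure (lebesgue_on Irr) (P j) = j * kap j m (B (Suc n)) * measure (lebesgue_on Irr) (AA n B j) * measure lborel (U \<inter> {0<..<1 / real_of_int m})"
        if "j \<in> {1..m}" for j
      proof -
        have "measure (lebesgue_on Irr) (P j) = j * measure lborel (W j m (B (Suc n)) U \<inter> {0<..<1 / real_of_int j}) * measure (lebesgue_on Irr) (AA n B j)"
          using Suc.IH[of "W j m (B (Suc n)) U" B j] Wp[OF that] unfolding P_def by blast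
        also have "W j m (B (Suc n)) U \<inter> {0<..<1 / real_of_int j} = W j m (B (Suc n)) U" using Wp[OF that] by blast
        finally show ?thesis using Wp[OF that] by simp
      qed
      have disj: "disjoint_family_on P {1..m}"
        unfolding disjoint_family_on_def P_def AA_def by auto
      have "(\<Union>j\<in>{1..m}. P j) \<in> sets (lebesgue_on Irr)" using Pm by auto
      moreover have "measure (lebesgue_on Irr) (\<Union>j\<in>{1..m}. P j) = (\<Sum>j\<in>{1..m}. measure (lebesgue_on Irr) (P j))"
        using Pm disj emeasure_M_fin by (intro measure_finite_Union) auto
      moreover have "(\<Sum>j\<in>{1..m}. measure (lebesgue_on Irr) (P j)) = measure lborel (U \<inter> {0<..<1 / real_of_int m}) * S"
        unfolding S_def sum_distrib_left using Pv by (intro sum.cong) auto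
      ultimately show ?thesis using e by simp
    qed
    have g1: "measure (lebesgue_on Irr) (AA (Suc n) B m) = S / m"
      using gen[of UNIV] m' by simp
    show ?thesis using gen[OF Suc.prems] g1 m' by simp
  qed
qed

end



lemma gg_meas: "gg \<in> borel \<rightarrow>\<^sub>M count_space UNIV"
proof -
  have "(\<lambda>u::real. (1 / u + 1) / 2) \<in> borel_measurable borel" by measurable
  then have "(\<lambda>u::real. \<lfloor>(1 / u + 1) / 2\<rfloor>) \<in> borel \<rightarrow>\<^sub>M count_space UNIV"
    using measurable_compose[OF _ measurable_real_floor] by blast
  then have "(\<lambda>u::real. 2 * \<lfloor>(1 / u + 1) / 2\<rfloor> - 1) \<in> borel \<rightarrow>\<^sub>M count_space UNIV"
    by (rule measurable_compose) simp
  then show ?thesis unfolding gg_def[abs_def] .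
qed

definition GG :: "int set \<Rightarrow> real set" where "GG Bs = {u. gg u \<in> Bs}"
definition PP :: "int set \<Rightarrow> real" where "PP Bs = measure lborel (GG Bs \<inter> {0<..<1})"

lemma GG_borel: "GG Bs \<in> sets borel"
proof -
  have "gg -` Bs \<inter> space borel \<in> sets borel" using measurable_sets[OF gg_meas, of Bs] by simp
  then show ?thesis by (simp add: GG_def vimage_def)
qed

lemma PP_UNIV: "PP UNIV = 1"
  by (simp add: PP_def GG_def)

lemma scale_PP:
  assumes j: "j \<ge> (1::int)"
  shows "real_of_int j * measure lborel ({z. gg (real_of_int j * z) \<in> Bs} \<inter> {0<..<1 / real_of_int j}) = PP Bs"
proof -
  have jp: "real_of_int j > 0" using j by simp
  have e: "{z. gg (real_of_int j * z) \<in> Bs} \<inter> {0<..<1 / real_of_int j} = (\<lambda>z. 0 + real_of_int j * z) -` (GG Bs \<inter> {0<..<1})"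
    using jp by (auto simp: GG_def field_simps zero_less_mult_iff)
  have "measure lborel ((\<lambda>z. 0 + real_of_int j * z) -` (GG Bs \<inter> {0<..<1})) = PP Bs / real_of_int j"
    using affine_measure[of "real_of_int j" "GG Bs \<inter> {0<..<1}" 0] jp GG_borel by (simp add: PP_def)
  then show ?thesis unfolding e using jp by simp
qed

context ysetup
begin

definition DD :: "nat \<Rightarrow> (nat \<Rightarrow> int set) \<Rightarrow> real set" where
  "DD n B = {x \<in> Irr. \<forall>i\<in>{1..n}. Y i x \<in> B i}"

lemma D:
  "DD n B \<in> sets (lebesgue_on Irr) \<and> measure (lebesgue_on Irr) (DD n B) = (\<Prod>i\<in>{1..n}. PP (B i))"
proof (induction n)
  case 0
  have "DD 0 B = Irr" by (simp add: DD_def)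
  moreover have "Irr \<in> sets (lebesgue_on Irr)" using sets_M[OF _ Irr_borel] by simp
  moreover have "measure (lebesgue_on Irr) Irr = 1" using measure_M[of UNIV] by simp
  ultimately show ?case by simp
next
  case (Suc n)
  define G where "G j = {z. gg (real_of_int j * z) \<in> B (Suc n)}" for j :: int
  have Gb: "G j \<in> sets borel" for j
  proof -
    have "(\<lambda>z. gg (real_of_int j * z)) \<in> borel \<rightarrow>\<^sub>M count_space UNIV"
      by (rule measurable_compose[OF _ gg_meas]) simp
    from measurable_sets[OF this, of "B (Suc n)"] show ?thesis by (simp add: G_def vimage_def)
  qed
  define Q where "Q j = AA n B (int j) \<inter> {x. zz n x \<in> G (int j)}" for j :: nat
  define R where "R j = AA n B (int j)" for j :: nat
  have eQ: "DD (Suc n) B = (\<Union>j. Q j)"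
  proof (intro equalityI subsetI)
    fix x assume x: "x \<in> DD (Suc n) B"
    then have xI: "x \<in> Irr" by (simp add: DD_def)
    have m1: "mm n x \<ge> 1" using inv[OF xI] by simp
    define j where "j = nat (mm n x)"
    have mj: "mm n x = int j" using m1 by (simp add: j_def)
    have "Y (Suc n) x \<in> B (Suc n)" using x by (simp add: DD_def)
    then have "zz n x \<in> G (int j)" using Y_eq[OF xI, of n] mj by (simp add: G_def)
    moreover have "x \<in> AA n B (int j)" using x mj by (auto simp: DD_def AA_def)
    ultimately show "x \<in> (\<Union>j. Q j)" by (auto simp: Q_def)
  next
    fix x assume "x \<in> (\<Union>j. Q j)"
    then obtain j where xa: "x \<in> AA n B (int j)" and xg: "zz n x \<in> G (int j)" by (auto simp: Q_def)
    have xI: "x \<in> Irr" and HB: "\<forall>i\<in>{1..n}. Y i x \<in> B i" and mj: "mm n x = int j" using xa by (auto simp: AA_def)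
    have "Y (Suc n) x \<in> B (Suc n)" using xg Y_eq[OF xI, of n] mj by (simp add: G_def)
    then show "x \<in> DD (Suc n) B" using xI HB by (auto simp: DD_def le_Suc_eq)
  qed
  have eR: "DD n B = (\<Union>j. R j)"
  proof (intro equalityI subsetI)
    fix x assume x: "x \<in> DD n B"
    then have xI: "x \<in> Irr" by (simp add: DD_def)
    have m1: "mm n x \<ge> 1" using inv[OF xI] by simp
    have "x \<in> R (nat (mm n x))" using x m1 by (auto simp: DD_def AA_def R_def)
    then show "x \<in> (\<Union>j. R j)" by blast
  qed (auto simp: DD_def AA_def R_def)
  have KQ: "Q j \<in> sets (lebesgue_on Irr) \<and> measure (lebesgue_on Irr) (Q j) = PP (B (Suc n)) * measure (lebesgue_on Irr) (R j)" for j
  proof -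
    note k = K[OF Gb[of "int j"], of n B "int j"]
    show ?thesis
    proof (cases "j = 0")
      case True
      then have "AA n B (int j) = {}" by (intro AA_empty) simp
      then show ?thesis by (simp add: Q_def R_def)
    next
      case False
      then have "int j \<ge> 1" by simp
      from scale_PP[OF this, of "B (Suc n)"] k show ?thesis
        by (simp add: Q_def R_def G_def)
    qed
  qed
  have KR: "R j \<in> sets (lebesgue_on Irr)" for j
    using K[of UNIV n B "int j"] by (simp add: R_def)
  have dQ: "disjoint_family Q" unfolding disjoint_family_on_def Q_def AA_def by auto
  have dR: "disjoint_family R" unfolding disjoint_family_on_def R_def AA_def by auto
  have sQ: "(\<lambda>j. measure (lebesgue_on Irr) (Q j)) sums measure (lebesgue_on Irr) (\<Union>j. Q j)"
    using KQ dQ emeasure_M_fin by (intro measure_UNION) auto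
  have sR: "(\<lambda>j. measure (lebesgue_on Irr) (R j)) sums measure (lebesgue_on Irr) (\<Union>j. R j)"
    using KR dR emeasure_M_fin by (intro measure_UNION) auto
  have "(\<lambda>j. measure (lebesgue_on Irr) (Q j)) sums (PP (B (Suc n)) * measure (lebesgue_on Irr) (\<Union>j. R j))"
    using sums_mult[OF sR, of "PP (B (Suc n))"] KQ by simp
  then have "measure (lebesgue_on Irr) (DD (Suc n) B) = PP (B (Suc n)) * measure (lebesgue_on Irr) (DD n B)"
    using sQ eQ eR sums_unique2 by metis
  moreover have "DD (Suc n) B \<in> sets (lebesgue_on Irr)" unfolding eQ using KQ by auto
  ultimately show ?case using Suc.IH by (simp add: mult.commute)
qed

lemma single:
  assumes n: "n \<ge> 1"
  shows "{x \<in> Irr. Y n x \<in> S} \<in> sets (lebesgue_on Irr) \<and> measure (lebesgue_on Irr) {x \<in> Irr. Y n x \<in> S} = PP S"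
proof -
  define B where "B i = (if i = n then S else UNIV)" for i
  have e: "DD n B = {x \<in> Irr. Y n x \<in> S}" using n by (auto simp: DD_def B_def)
  have "(\<Prod>i\<in>{1..n}. PP (B i)) = (\<Prod>i\<in>{n}. PP (B i))"
    using n by (intro prod.mono_neutral_right) (auto simp: B_def PP_UNIV)
  then show ?thesis using D[of n B] e by (simp add: B_def)
qed

end



lemma PP_ge:
  assumes k: "k \<ge> (1::nat)"
  shows "PP {a. a \<ge> 2 * int k - 1} = 1 / (2 * real k - 1)"
proof -
  define c where "c = 1 / (2 * real k - 1)"
  have kp: "2 * real k - 1 > 0" using k by simp
  have iff: "gg u \<ge> 2 * int k - 1 \<longleftrightarrow> u \<le> c" if u: "u > 0" for u :: real
  proof -
    have "gg u \<ge> 2 * int k - 1 \<longleftrightarrow> int k \<le> \<lfloor>(1 / u + 1) / 2\<rfloor>" unfolding gg_def by linarith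
    also have "... \<longleftrightarrow> real k \<le> (1 / u + 1) / 2" by (simp add: le_floor_iff)
    also have "... \<longleftrightarrow> 2 * real k - 1 \<le> 1 / u" by (simp add: field_simps)
    also have "... \<longleftrightarrow> u \<le> c" unfolding c_def using u kp by (simp add: field_simps)
    finally show ?thesis .
  qed
  have S: "GG {a. a \<ge> 2 * int k - 1} \<inter> {0<..<1} = {u. 0 < u \<and> u < 1 \<and> u \<le> c}"
    using iff by (auto simp: GG_def)
  show ?thesis
  proof (cases "k = 1")
    case True
    then have "c = 1" by (simp add: c_def)
    then have "{u. 0 < u \<and> u < 1 \<and> u \<le> c} = {0<..<1::real}" by auto
    then show ?thesis unfolding PP_def S using True by simp
  next
    case False
    then have "k \<ge> 2" using k by simp
    then have "c < 1" "c > 0" using kp unfolding c_def by (auto simp: field_simps)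
    then have "{u. 0 < u \<and> u < 1 \<and> u \<le> c} = {0<..c}" by auto
    then show ?thesis unfolding PP_def S using \<open>c > 0\<close> by (simp add: c_def)
  qed
qed

theorem lemma3p7:
  fixes Y :: "nat \<Rightarrow> real \<Rightarrow> int"
  assumes odd: "\<And>n x. n \<ge> 1 \<Longrightarrow> x \<in> Irr \<Longrightarrow> odd (Y n x)"
    and first: "\<And>x. x \<in> Irr \<Longrightarrow> Y 1 x \<le> dig 1 x \<and> dig 1 x < Y 1 x + 2"
    and same: "\<And>n x. n \<ge> 2 \<Longrightarrow> x \<in> Irr \<Longrightarrow> eps n x = eps (n - 1) x \<Longrightarrow>
         real_of_int (Y n x) \<le> real_of_int (dig n x) / real_of_int (dig (n - 1) x - 1) \<and>
         real_of_int (dig n x) / real_of_int (dig (n - 1) x - 1) < real_of_int (Y n x) + 2"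
    and flip: "\<And>n x. n \<ge> 2 \<Longrightarrow> x \<in> Irr \<Longrightarrow> eps n x = - eps (n - 1) x \<Longrightarrow>
         real_of_int (Y n x) \<le> real_of_int (dig n x) / real_of_int (dig (n - 1) x + 1) \<and>
         real_of_int (dig n x) / real_of_int (dig (n - 1) x + 1) < real_of_int (Y n x) + 2"
  shows "(\<forall>n k::nat. n \<ge> 1 \<longrightarrow> k \<ge> 1 \<longrightarrow>
            measure (lebesgue_on Irr) {x \<in> Irr. Y n x \<ge> 2 * int k - 1} = 1 / (2 * real k - 1))
       \<and> (\<forall>(n::nat) (t::real). n \<ge> 1 \<longrightarrow> t > 0 \<longrightarrow>
            1 / (t + 2) < measure (lebesgue_on Irr) {x \<in> Irr. real_of_int (Y n x) \<ge> t} \<and>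
            measure (lebesgue_on Irr) {x \<in> Irr. real_of_int (Y n x) \<ge> t} \<le> 1 / t)
       \<and> prob_space.indep_vars (lebesgue_on Irr) (\<lambda>_. count_space UNIV) Y {1..}
       \<and> (\<forall>n m. n \<ge> 1 \<longrightarrow> m \<ge> 1 \<longrightarrow>
            distr (lebesgue_on Irr) (count_space UNIV) (Y n)
          = distr (lebesgue_on Irr) (count_space UNIV) (Y m))"

proof -
  interpret ysetup Y by (rule ysetup.intro[OF odd first same flip])
  interpret P: prob_space "lebesgue_on Irr" by (rule prob_M)
  have part1: "\<forall>n k::nat. n \<ge> 1 \<longrightarrow> k \<ge> 1 \<longrightarrow>
            measure (lebesgue_on Irr) {x \<in> Irr. Y n x \<ge> 2 * int k - 1} = 1 / (2 * real k - 1)"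
  proof (intro allI impI)
    fix n k :: nat assume n: "n \<ge> 1" and k: "k \<ge> 1"
    have "{x \<in> Irr. Y n x \<ge> 2 * int k - 1} = {x \<in> Irr. Y n x \<in> {a. a \<ge> 2 * int k - 1}}" by simp
    then show "measure (lebesgue_on Irr) {x \<in> Irr. Y n x \<ge> 2 * int k - 1} = 1 / (2 * real k - 1)"
      using single[OF n, of "{a. a \<ge> 2 * int k - 1}"] PP_ge[OF k] by simp
  qed
  have part2: "\<forall>(n::nat) (t::real). n \<ge> 1 \<longrightarrow> t > 0 \<longrightarrow>
            1 / (t + 2) < measure (lebesgue_on Irr) {x \<in> Irr. real_of_int (Y n x) \<ge> t} \<and>
            measure (lebesgue_on Irr) {x \<in> Irr. real_of_int (Y n x) \<ge> t} \<le> 1 / t"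
  proof (intro allI impI)
    fix n :: nat and t :: real assume n: "n \<ge> 1" and t: "t > 0"
    define c where "c = \<lceil>(t + 1) / 2\<rceil>"
    have c1: "(t + 1) / 2 \<le> c" "c < (t + 1) / 2 + 1" unfolding c_def by linarith+
    have c2: "t \<le> 2 * real_of_int c - 1" "2 * real_of_int c - 3 < t" using c1 by (simp_all add: field_simps)
    have "real_of_int c > 0" using c2 t by linarith
    then have cpos: "c \<ge> 1" by simp
    define K where "K = nat c"
    have K: "K \<ge> 1" "int K = c" using cpos by (auto simp: K_def)
    have e: "{x \<in> Irr. real_of_int (Y n x) \<ge> t} = {x \<in> Irr. Y n x \<ge> 2 * int K - 1}"
    proof (intro Collect_cong conj_cong refl)
      fix x assume x: "x \<in> Irr"
      have oq: "odd (Y n x)" using odd[OF n x] .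
      show "(real_of_int (Y n x) \<ge> t) = (Y n x \<ge> 2 * int K - 1)"
      proof
        assume "real_of_int (Y n x) \<ge> t"
        then have "real_of_int (Y n x) > 2 * real_of_int c - 3" using c2 by linarith
        then have "Y n x > 2 * c - 3" by linarith
        then have "Y n x \<ge> 2 * c - 2" by linarith
        moreover have "even (2 * c - 2)" by simp
        then have "Y n x \<noteq> 2 * c - 2" using oq by metis
        ultimately show "Y n x \<ge> 2 * int K - 1" using K by linarith
      next
        assume "Y n x \<ge> 2 * int K - 1"
        then have "real_of_int (Y n x) \<ge> 2 * real_of_int c - 1" using K by linarith
        then show "real_of_int (Y n x) \<ge> t" using c2 by linarith
      qed
    qed
    have meq: "measure (lebesgue_on Irr) {x \<in> Irr. real_of_int (Y n x) \<ge> t} = 1 / (2 * real K - 1)"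
      using part1 n K(1) unfolding e by blast
    have rK: "2 * real K - 1 = 2 * real_of_int c - 1" using K by simp
    have pos: "2 * real K - 1 > 0" using K by simp
    have "1 / (t + 2) < 1 / (2 * real K - 1)" using pos c2 rK by (intro frac_less2) auto
    moreover have "1 / (2 * real K - 1) \<le> 1 / t" using t c2 rK by (intro frac_le) auto
    ultimately show "1 / (t + 2) < measure (lebesgue_on Irr) {x \<in> Irr. real_of_int (Y n x) \<ge> t} \<and>
            measure (lebesgue_on Irr) {x \<in> Irr. real_of_int (Y n x) \<ge> t} \<le> 1 / t" using meq by simp
  qed
  have pre: "\<And>i S. i \<ge> 1 \<Longrightarrow> Y i -` S \<inter> Irr = {x \<in> Irr. Y i x \<in> S}" by auto
  have rv: "Y i \<in> measurable (lebesgue_on Irr) (count_space UNIV)" if i: "i \<ge> 1" for i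
  proof (rule measurableI)
    fix A :: "int set" assume "A \<in> sets (count_space UNIV)"
    show "Y i -` A \<inter> space (lebesgue_on Irr) \<in> sets (lebesgue_on Irr)"
      using single[OF i, of A] pre[OF i] by simp
  qed simp
  have part3: "P.indep_vars (\<lambda>_. count_space UNIV) Y {1..}"
    unfolding P.indep_vars_def2 P.indep_sets_def
  proof (intro conjI ballI allI impI)
    fix i :: nat assume "i \<in> {1..}"
    then show "Y i \<in> measurable (lebesgue_on Irr) (count_space UNIV)" using rv by simp
  next
    fix i :: nat assume i: "i \<in> {1..}"
    show "{Y i -` A \<inter> space (lebesgue_on Irr) |A. A \<in> sets (count_space UNIV)} \<subseteq> P.events"
    proof (rule subsetI)
      have i1: "i \<ge> 1" using i by simp
      fix S assume "S \<in> {Y i -` A \<inter> space (lebesgue_on Irr) |A. A \<in> sets (count_space UNIV)}"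
      then obtain A where "S = Y i -` A \<inter> Irr" by auto
      then show "S \<in> P.events" using single[OF i1, of A] pre[OF i1] by simp
    qed
  next
    fix J :: "nat set" and A assume J: "J \<subseteq> {1..}" "J \<noteq> {}" "finite J"
      and A: "A \<in> (\<Pi> j\<in>J. {Y j -` A \<inter> space (lebesgue_on Irr) |A. A \<in> sets (count_space UNIV)})"
    have "\<forall>j\<in>J. \<exists>S. A j = Y j -` S \<inter> Irr" using A by (auto simp: Pi_def)
    then obtain Sf where Sf: "\<And>j. j \<in> J \<Longrightarrow> A j = Y j -` Sf j \<inter> Irr" by metis
    define N where "N = Max J"
    define B' where "B' i = (if i \<in> J then Sf i else UNIV)" for i
    have JN: "J \<subseteq> {1..N}" using J by (auto simp: N_def)
    have eI: "(\<Inter>j\<in>J. A j) = DD N B'"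
    proof (intro equalityI subsetI)
      fix x assume x: "x \<in> (\<Inter>j\<in>J. A j)"
      obtain j0 where "j0 \<in> J" using J by blast
      then have "x \<in> A j0" using x by blast
      then have xI: "x \<in> Irr" using Sf[OF \<open>j0 \<in> J\<close>] by blast
      have Yx: "Y j x \<in> Sf j" if "j \<in> J" for j
      proof -
        have "x \<in> A j" using x that by blast
        then show ?thesis using Sf[OF that] by blast
      qed
      show "x \<in> DD N B'" using Yx xI by (auto simp: DD_def B'_def)
    next
      fix x assume x: "x \<in> DD N B'"
      then have xI: "x \<in> Irr" and H: "\<forall>i\<in>{1..N}. Y i x \<in> B' i" by (auto simp: DD_def)
      show "x \<in> (\<Inter>j\<in>J. A j)"
      proof
        fix j assume j: "j \<in> J"
        then have "j \<in> {1..N}" using JN by blast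
        then have "Y j x \<in> B' j" using H by blast
        then have "Y j x \<in> Sf j" using j by (simp add: B'_def)
        then show "x \<in> A j" using Sf[OF j] xI by blast
      qed
    qed
    have "P.prob (\<Inter>j\<in>J. A j) = (\<Prod>i\<in>{1..N}. PP (B' i))" unfolding eI using D by blast
    also have "... = (\<Prod>i\<in>J. PP (B' i))"
      using JN by (intro prod.mono_neutral_right) (auto simp: B'_def PP_UNIV)
    also have "... = (\<Prod>j\<in>J. P.prob (A j))"
    proof (rule prod.cong)
      fix j assume j: "j \<in> J"
      then have j1: "j \<ge> 1" using J by auto
      show "PP (B' j) = P.prob (A j)" using single[OF j1, of "Sf j"] Sf[OF j] pre[OF j1] j by (simp add: B'_def)
    qed simp
    finally show "P.prob (\<Inter>j\<in>J. A j) = (\<Prod>j\<in>J. P.prob (A j))" .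
  qed
  have em: "emeasure (distr (lebesgue_on Irr) (count_space UNIV) (Y n)) S = ennreal (PP S)" if n: "n \<ge> 1" for n S
  proof -
    have "emeasure (distr (lebesgue_on Irr) (count_space UNIV) (Y n)) S = emeasure (lebesgue_on Irr) (Y n -` S \<inter> Irr)"
      using rv[OF n] by (subst emeasure_distr) auto
    also have "... = ennreal (measure (lebesgue_on Irr) (Y n -` S \<inter> Irr))" by (rule P.emeasure_eq_measure)
    also have "... = ennreal (PP S)" using single[OF n, of S] pre[OF n] by simp
    finally show ?thesis .
  qed
  have part4: "\<forall>n m. n \<ge> 1 \<longrightarrow> m \<ge> 1 \<longrightarrow>
            distr (lebesgue_on Irr) (count_space UNIV) (Y n)
          = distr (lebesgue_on Irr) (count_space UNIV) (Y m)"
  proof (intro allI impI)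
    fix n m :: nat assume n: "n \<ge> 1" and m: "m \<ge> 1"
    show "distr (lebesgue_on Irr) (count_space UNIV) (Y n) = distr (lebesgue_on Irr) (count_space UNIV) (Y m)"
      by (rule measure_eqI) (simp_all add: em[OF n] em[OF m])
  qed
  show ?thesis using part1 part2 part3 part4 by blast
qed


end
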